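(* Assume the standing setting and assumptions (A4)–(A8) described in the context. Let $k\in\mathbb{N}$, $k\ge 1$, let $U(T)=U_k(T)$ for all $T\in\mathcal{T}_H$, and let $u_H^{\mathrm{G\text{-}LOD}}\in V^{\mathrm{ms}}$ be the solution of $$a_h(u_H^{\mathrm{G\text{-}LOD}},\Phi^{\mathrm{ms}})=(f,\Phi^{\mathrm{ms}})\quad\text{for all }\Phi^{\mathrm{ms}}\in V^{\mathrm{ms}}.$$ Let $u_h\in V_h$ be the fine scale reference solution. Then $$\big\|u_h-\big((I_H|_{V_H})^{-1}\circ I_H\big)(u_H^{\mathrm{G\text{-}LOD}})\big\|_{L^2(\Omega)}+|||u_h-u_H^{\mathrm{G\text{-}LOD}}|||_h\lesssim\big(H+(1/H)^p k^{d/2}\theta^k\big)\|f\|_{L^2(\Omega)},$$ where $\theta\in(0,1)$ and $p\in\{0,1\}$ are the constants from (A8).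
   Context: Standing setting. $\Omega\subset\mathbb{R}^d$, $d\in\{1,2,3\}$, is a bounded Lipschitz domain with piecewise polygonal boundary; $f\in L^2(\Omega)$; $A\in L^\infty(\Omega,\mathbb{R}^{d\times d}_{sym})$ with spectrum $\sigma(A(x))\subset[\alpha_0,\beta_0]$, $0<\alpha_0\le\beta_0$, for a.e. $x\in\Omega$. $(\cdot,\cdot)$ denotes the $L^2(\Omega)$ inner product. $\mathcal{T}_H$ (coarse) and $\mathcal{T}_h$ (fine) are shape-regular conforming partitions of $\Omega$ with maximal element diameters $H$ and $h<H/2$; $\mathcal{T}_h$ is a refinement of $\mathcal{T}_H$ in which each coarse element is at least twice uniformly refined. (A4)/(A6): $V_h$ is a finite-dimensional space of functions on $\Omega$ (not necessarily a subspace of $H^1_0(\Omega)$), $V_H\subset V_h$ is a subspace associated with $\mathcal{T}_H$, $a_h(\cdot,\cdot)$ is a scalar product on $V_h$ and $a_H(\cdot,\cdot)$ a scalar product on $V_H$. (A5): $|||\cdot|||_h$ is a norm on $V_h$ and there are constants $0<\alpha\le\beta$ with $\alpha|||v|||_h^2\le a_h(v,v)$ and $a_h(v,w)\le\beta|||v|||_h|||w|||_h$ for all $v,w\in V_h$; $|||\cdot|||_H$ is a norm on $V_H$ (also evaluated on elements of $V_h$), and $C_{H,h}$ is a constant with $|||v|||_H\le C_{H,h}|||v|||_h$ for all $v\in V_h$. (A7): $I_H:V_h\to V_H$ is linear and there is a constant $C_{I_H}$ (depending only on shape regularity) such that for all $v_h\in V_h$, $v_H\in V_H$: $\|v_h-I_H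 v_h\|_{L^2(\Omega)}\le C_{I_H}H|||v_h|||_h$, $|||I_Hv_h|||_H\le C_{I_H}|||v_h|||_h$, $\|v_H-I_Hv_H\|_{L^2(\Omega)}\le C_{I_H}H|||v_H|||_H$, $\|I_Hv_H\|_{L^2(\Omega)}\le C_{I_H}|||v_H|||_H$; moreover $I_H|_{V_H}:V_H\to V_H$ is an isomorphism and $|||(I_H|_{V_H})^{-1}v_H|||_H\le C_{I_H^{-1}}|||v_H|||_H$ for all $v_H\in V_H$. Definitions. $W_h:=\{v\in V_h: I_Hv=0\}$, so $V_h=V_H\oplus W_h$. $P_h:V_h\to W_h$ is the $a_h$-orthogonal projection ($a_h(P_hv,w)=a_h(v,w)$ for all $w\in W_h$) and $V^{\mathrm{ms}}_\Omega:=(1-P_h)(V_H)$. Coarse patches: $U_0(T):=T$, $U_k(T):=\bigcup\{T'\in\mathcal{T}_H: T'\cap U_{k-1}(T)\ne\emptyset\}$. For an open set $U$ that is a union of fine elements, $\mathring W_h(U):=\{v\in W_h: v=0 \text{ in }\Omega\setminus U\}$. Bilinear forms $a_h^T$, $T\in\mathcal{T}_H$, are given with $a_h(v,w)=\sum_{T\in\mathcal{T}_H}a_h^T(v,w)$ for all $v,w\in V_h$ ($a_h^T$ acting only on $T$ or a small neighbourhood of $T$). Given patches $U(T)\supset T$, for $\phi\in V_h$ the local corrector $Q_h^T(\phi)\in\mathring W_h(U(T))$ solves $a_h(Q_h^T(\phi),w)=-a_h^T(\phi,w)$ for all $w\in\mathring W_h(U(T))$; $Q_h(\phi):=\sum_{T}Q_h^T(\phi)$,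 and $V^{\mathrm{ms}}:=\{\Phi_H+Q_h(\Phi_H):\Phi_H\in V_H\}$. $Q_h^{\Omega,T}$ and $Q_h^\Omega:=\sum_TQ_h^{\Omega,T}$ denote the correctors obtained with $U(T)=\Omega$ for all $T$. (A8): There are $p\in\{0,1\}$ and $\theta\in(0,1)$ (possibly depending on the contrast $\beta_0/\alpha_0$ but not on $H,h$ or the oscillations of $A$) such that for every $k\ge1$, with $U(T)=U_k(T)$ for all $T$, and all $\Phi_H\in V_H$: $|||(Q_h-Q_h^\Omega)(\Phi_H)|||_h^2\lesssim k^d\theta^{2k}(1/H)^{2p}|||\Phi_H+Q_h^\Omega(\Phi_H)|||_h^2$. Fine scale reference solution: $u_h\in V_h$ with $a_h(u_h,v)=(f,v)$ for all $v\in V_h$. Notation: $a\lesssim b$ means $a\le Cb$ with $C$ independent of $H$, $h$, $k$ and the oscillations of $A$ (it may depend on $\alpha,\beta,C_{I_H},C_{I_H^{-1}}$, shape regularity and the contrast). *)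

theory Defs
  imports "HOL-Analysis.Analysis"
begin

type_synonym 'd fn = "real^'d \<Rightarrow> real"

definition fadd :: "'d fn \<Rightarrow> 'd fn \<Rightarrow> 'd fn" where
  "fadd u v = (\<lambda>x. u x + v x)"

definition fscale :: "real \<Rightarrow> 'd fn \<Rightarrow> 'd fn" where
  "fscale c u = (\<lambda>x. c * u x)"

definition fdiff :: "'d fn \<Rightarrow> 'd fn \<Rightarrow> 'd fn" where
  "fdiff u v = (\<lambda>x. u x - v x)"

definition fzero :: "'d fn" where
  "fzero = (\<lambda>x. 0)"

definition fsubspace :: "'d fn set \<Rightarrow> bool" where
  "fsubspace V \<longleftrightarrow> fzero \<in> V \<and> (\<forall>u\<in>V. \<forall>v\<in>V. \<forall>c. fadd u (fscale c v) \<in> V)"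

definition findim :: "'d fn set \<Rightarrow> bool" where
  "findim V \<longleftrightarrow> (\<exists>B. finite B \<and> B \<subseteq> V \<and>
      (\<forall>v\<in>V. \<exists>c. v = (\<lambda>x. \<Sum>b\<in>B. c b * b x)))"

definition linear_on :: "'d fn set \<Rightarrow> ('d fn \<Rightarrow> 'd fn) \<Rightarrow> bool" where
  "linear_on V L \<longleftrightarrow> (\<forall>u\<in>V. \<forall>v\<in>V. \<forall>c. L (fadd u (fscale c v)) = fadd (L u) (fscale c (L v)))"

definition bilinear_on :: "'d fn set \<Rightarrow> ('d fn \<Rightarrow> 'd fn \<Rightarrow> real) \<Rightarrow> bool" where
  "bilinear_on V a \<longleftrightarrow> (\<forall>u\<in>V. \<forall>v\<in>V. \<forall>w\<in>V. \<forall>c.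
      a (fadd u (fscale c v)) w = a u w + c * a v w \<and>
      a w (fadd u (fscale c v)) = a w u + c * a w v)"

definition scalar_product_on :: "'d fn set \<Rightarrow> ('d fn \<Rightarrow> 'd fn \<Rightarrow> real) \<Rightarrow> bool" where
  "scalar_product_on V a \<longleftrightarrow> bilinear_on V a \<and> (\<forall>u\<in>V. \<forall>v\<in>V. a u v = a v u) \<and>
      (\<forall>v\<in>V. v \<noteq> fzero \<longrightarrow> a v v > 0)"

definition norm_on :: "'d fn set \<Rightarrow> ('d fn \<Rightarrow> real) \<Rightarrow> bool" where
  "norm_on V n \<longleftrightarrow> (\<forall>v\<in>V. n v \<ge> 0 \<and> (n v = 0 \<longleftrightarrow> v = fzero)) \<and>
      (\<forall>v\<in>V. \<forall>c. n (fscale c v) = \<bar>c\<bar> * n v) \<and>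
      (\<forall>u\<in>V. \<forall>v\<in>V. n (fadd u v) \<le> n u + n v)"

definition L2_fun :: "(real^'d) set \<Rightarrow> 'd fn \<Rightarrow> bool" where
  "L2_fun \<Omega> v \<longleftrightarrow> v \<in> borel_measurable (lebesgue_on \<Omega>) \<and>
      integrable (lebesgue_on \<Omega>) (\<lambda>x. (v x)\<^sup>2)"

definition L2_inner :: "(real^'d) set \<Rightarrow> 'd fn \<Rightarrow> 'd fn \<Rightarrow> real" where
  "L2_inner \<Omega> u v = integral\<^sup>L (lebesgue_on \<Omega>) (\<lambda>x. u x * v x)"

definition L2_norm :: "(real^'d) set \<Rightarrow> 'd fn \<Rightarrow> real" where
  "L2_norm \<Omega> v = sqrt (integral\<^sup>L (lebesgue_on \<Omega>) (\<lambda>x. (v x)\<^sup>2))"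

definition conforming_mesh :: "(real^'d) set \<Rightarrow> (real^'d) set set \<Rightarrow> bool" where
  "conforming_mesh \<Omega> \<T> \<longleftrightarrow> finite \<T> \<and> \<T> \<noteq> {} \<and>
     (\<forall>K\<in>\<T>. polytope K \<and> interior K \<noteq> {}) \<and>
     \<Union>\<T> = closure \<Omega> \<and>
     (\<forall>K\<in>\<T>. \<forall>K'\<in>\<T>. (K \<inter> K') face_of K \<and> (K \<inter> K') face_of K')"

definition shape_regular :: "real \<Rightarrow> (real^'d) set set \<Rightarrow> bool" where
  "shape_regular \<rho> \<T> \<longleftrightarrow> (\<forall>K\<in>\<T>. \<exists>x r. r > 0 \<and> ball x r \<subseteq> K \<and> diameter K \<le> \<rho> * r)"

definition mesh_size :: "(real^'d) set set \<Rightarrow> real" where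
  "mesh_size \<T> = Max (diameter ` \<T>)"

definition refines :: "(real^'d) set set \<Rightarrow> (real^'d) set set \<Rightarrow> bool" where
  "refines \<T>h \<T>H \<longleftrightarrow> (\<forall>K\<in>\<T>h. \<exists>K'\<in>\<T>H. K \<subseteq> K')"

fun patch :: "(real^'d) set set \<Rightarrow> nat \<Rightarrow> (real^'d) set \<Rightarrow> (real^'d) set" where
  "patch \<T> 0 T = T"
| "patch \<T> (Suc k) T = \<Union>{T'\<in>\<T>. T' \<inter> patch \<T> k T \<noteq> {}}"

definition Wh :: "'d fn set \<Rightarrow> ('d fn \<Rightarrow> 'd fn) \<Rightarrow> 'd fn set" where
  "Wh Vh IH = {v\<in>Vh. IH v = fzero}"

definition Wh_loc :: "(real^'d) set \<Rightarrow> 'd fn set \<Rightarrow> ('d fn \<Rightarrow> 'd fn) \<Rightarrow> (real^'d) set \<Rightarrow> 'd fn set" where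
  "Wh_loc \<Omega> Vh IH U = {v\<in>Wh Vh IH. AE x in lebesgue. x \<in> \<Omega> - U \<longrightarrow> v x = 0}"

definition loc_corrector :: "'d fn set \<Rightarrow> ('d fn \<Rightarrow> 'd fn \<Rightarrow> real) \<Rightarrow> ('d fn \<Rightarrow> 'd fn \<Rightarrow> real)
     \<Rightarrow> 'd fn \<Rightarrow> 'd fn" where
  "loc_corrector W a aT \<phi> = (THE q. q \<in> W \<and> (\<forall>w\<in>W. a q w = - aT \<phi> w))"

definition corrector :: "(real^'d) set \<Rightarrow> (real^'d) set set \<Rightarrow> 'd fn set \<Rightarrow> ('d fn \<Rightarrow> 'd fn)
     \<Rightarrow> ('d fn \<Rightarrow> 'd fn \<Rightarrow> real) \<Rightarrow> ((real^'d) set \<Rightarrow> 'd fn \<Rightarrow> 'd fn \<Rightarrow> real)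
     \<Rightarrow> ((real^'d) set \<Rightarrow> (real^'d) set) \<Rightarrow> 'd fn \<Rightarrow> 'd fn" where
  "corrector \<Omega> \<T>H Vh IH a aT U \<phi> =
     (\<lambda>x. \<Sum>T\<in>\<T>H. loc_corrector (Wh_loc \<Omega> Vh IH (U T)) a (aT T) \<phi> x)"

definition Vms :: "(real^'d) set \<Rightarrow> (real^'d) set set \<Rightarrow> 'd fn set \<Rightarrow> 'd fn set \<Rightarrow> ('d fn \<Rightarrow> 'd fn)
     \<Rightarrow> ('d fn \<Rightarrow> 'd fn \<Rightarrow> real) \<Rightarrow> ((real^'d) set \<Rightarrow> 'd fn \<Rightarrow> 'd fn \<Rightarrow> real)
     \<Rightarrow> ((real^'d) set \<Rightarrow> (real^'d) set) \<Rightarrow> 'd fn set" where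
  "Vms \<Omega> \<T>H Vh VH IH a aT U = {fadd \<Phi> (corrector \<Omega> \<T>H Vh IH a aT U \<Phi>) | \<Phi>. \<Phi> \<in> VH}"

end

theory Submission
  imports Defs "HOL-Library.Function_Algebras"
begin


lemma fadd_eq: "fadd u v = u + v" by (simp add: fadd_def plus_fun_def)
lemma fdiff_eq: "fdiff u v = u - v" by (simp add: fdiff_def fun_diff_def)
lemma fzero_eq: "fzero = 0" by (simp add: fzero_def zero_fun_def)

interpretation FV: vector_space "fscale :: real \<Rightarrow> ('d::finite) fn \<Rightarrow> 'd fn"
  by unfold_locales (auto simp: fscale_def plus_fun_def algebra_simps)

lemma sum_fun_app: "(sum f A) x = (\<Sum>a\<in>A. (f a :: 'b \<Rightarrow> 'c::comm_monoid_add) x)"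
  by (induct A rule: infinite_finite_induct) auto

lemma fscale_minus1: "fscale (-1) v = - v" by (auto simp: fscale_def)

lemma fsub_sub: assumes "fsubspace V" shows "FV.subspace V"
proof -
  have z: "0 \<in> V" using assms by (simp add: fsubspace_def fzero_eq)
  have "fadd u (fscale c v) \<in> V" if "u\<in>V" "v\<in>V" for u v c using assms that by (simp add: fsubspace_def)
  then have a: "u + fscale c v \<in> V" if "u\<in>V" "v\<in>V" for u v c using that by (simp add: fadd_eq)
  have "u + fscale 1 v = u + v" for u v :: "'a fn" by (simp add: fscale_def)
  moreover have "(0::'a fn) + fscale c v = fscale c v" for c v by simp
  ultimately show ?thesis using a z unfolding FV.subspace_def by metis
qed

lemma findim_span: assumes "findim V" shows "\<exists>B. finite B \<and> V \<subseteq> FV.span B"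
proof -
  obtain B where B: "finite B" "B \<subseteq> V" "\<forall>v\<in>V. \<exists>c. v = (\<lambda>x. \<Sum>b\<in>B. c b * b x)"
    using assms unfolding findim_def by blast
  have "V \<subseteq> FV.span B"
  proof
    fix v assume "v \<in> V"
    then obtain c where c: "v = (\<lambda>x. \<Sum>b\<in>B. c b * b x)" using B by blast
    have "v = (\<Sum>b\<in>B. fscale (c b) b)" unfolding c by (auto simp: fscale_def sum_fun_app)
    then show "v \<in> FV.span B" by (simp add: FV.span_finite[OF B(1)])
  qed
  then show ?thesis using B by blast
qed

lemma fscale_1[simp]: "fscale 1 v = v" by (simp add: fscale_def)
lemma fscale_0v[simp]: "fscale c 0 = 0" by (simp add: fscale_def zero_fun_def)

locale spd =
  fixes W :: "('d::finite) fn set" and a :: "'d fn \<Rightarrow> 'd fn \<Rightarrow> real"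
  assumes sub: "FV.subspace W"
  and bl1: "\<And>u v w c. u\<in>W \<Longrightarrow> v\<in>W \<Longrightarrow> w\<in>W \<Longrightarrow> a (u + fscale c v) w = a u w + c * a v w"
  and sy: "\<And>u v. u\<in>W \<Longrightarrow> v\<in>W \<Longrightarrow> a u v = a v u"
  and pos: "\<And>v. v\<in>W \<Longrightarrow> v \<noteq> 0 \<Longrightarrow> a v v > 0"
begin

lemma W0: "0 \<in> W" using sub FV.subspace_0 by blast
lemma Wadd: "u\<in>W \<Longrightarrow> v\<in>W \<Longrightarrow> u + v \<in> W" using sub FV.subspace_add by blast
lemma Wscale: "v\<in>W \<Longrightarrow> fscale c v \<in> W" using sub FV.subspace_scale by blast
lemma Wdiff: "u\<in>W \<Longrightarrow> v\<in>W \<Longrightarrow> u - v \<in> W" using sub FV.subspace_diff by blast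

lemma a0l: "w\<in>W \<Longrightarrow> a 0 w = 0"
  using bl1[of 0 0 w 1] W0 by simp
lemma ascl: "v\<in>W \<Longrightarrow> w\<in>W \<Longrightarrow> a (fscale c v) w = c * a v w"
  using bl1[of 0 v w c] W0 a0l by simp
lemma aaddl: "u\<in>W \<Longrightarrow> v\<in>W \<Longrightarrow> w\<in>W \<Longrightarrow> a (u + v) w = a u w + a v w"
  using bl1[of u v w 1] by simp
lemma adiffl: "u\<in>W \<Longrightarrow> v\<in>W \<Longrightarrow> w\<in>W \<Longrightarrow> a (u - v) w = a u w - a v w"
  using bl1[of u v w "-1"] by (simp add: fscale_minus1)
lemma a0r: "w\<in>W \<Longrightarrow> a w 0 = 0" using a0l sy W0 by metis
lemma ascr: "v\<in>W \<Longrightarrow> w\<in>W \<Longrightarrow> a w (fscale c v) = c * a w v"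
  using ascl sy Wscale by metis
lemma aaddr: "u\<in>W \<Longrightarrow> v\<in>W \<Longrightarrow> w\<in>W \<Longrightarrow> a w (u + v) = a w u + a w v"
  using aaddl sy Wadd by metis
lemma adiffr: "u\<in>W \<Longrightarrow> v\<in>W \<Longrightarrow> w\<in>W \<Longrightarrow> a w (u - v) = a w u - a w v"
  using adiffl sy Wdiff by metis

definition lin :: "('d fn \<Rightarrow> real) \<Rightarrow> bool" where
  "lin l \<longleftrightarrow> (\<forall>u\<in>W. \<forall>v\<in>W. \<forall>c. l (u + fscale c v) = l u + c * l v)"

lemma lin0: "lin l \<Longrightarrow> l 0 = 0" unfolding lin_def using W0 by (metis add.right_neutral add_cancel_right_right fscale_0v mult_1)

lemma lin_a: "v \<in> W \<Longrightarrow> lin (a v)" unfolding lin_def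
  by (simp add: aaddr ascr Wscale)

lemma ext_span:
  assumes l: "lin l" and q: "q \<in> W" and S: "S \<subseteq> W" and h: "\<forall>s\<in>S. a q s = l s"
  shows "\<forall>w\<in>FV.span S. a q w = l w"
proof -
  let ?P = "{w\<in>W. a q w = l w}"
  have "FV.subspace ?P"
    unfolding FV.subspace_def
  proof (intro conjI ballI allI)
    show "0 \<in> ?P" using W0 a0r[OF q] lin0[OF l] by simp
    fix x y assume "x\<in>?P" "y\<in>?P"
    then show "x + y \<in> ?P" using l[unfolded lin_def, rule_format, of x y 1] by (simp add: Wadd aaddr q)
  next
    fix c x assume "x\<in>?P"
    then show "fscale c x \<in> ?P" using l[unfolded lin_def, rule_format, of 0 x c] W0 lin0[OF l]
      by (simp add: Wscale ascr q)
  qed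
  moreover have "S \<subseteq> ?P" using S h by auto
  ultimately show ?thesis using FV.span_minimal by blast
qed

lemma span_W: "S \<subseteq> W \<Longrightarrow> FV.span S \<subseteq> W" using FV.span_minimal sub by blast

lemma riesz_fin:
  assumes "finite S" "S \<subseteq> W"
  shows "\<forall>l. lin l \<longrightarrow> (\<exists>q\<in>FV.span S. \<forall>s\<in>S. a q s = l s)"
  using assms
proof (induction S rule: finite_induct)
  case empty
  then show ?case using FV.span_zero by blast
next
  case (insert x S)
  show ?case
  proof (intro allI impI)
    fix l assume l: "lin l"
    have xW: "x \<in> W" and SW: "S \<subseteq> W" using insert by auto
    have spS: "FV.span S \<subseteq> W" using span_W[OF SW] .
    obtain q0 where q0: "q0 \<in> FV.span S" "\<forall>s\<in>S. a q0 s = l s" using insert l SW by blast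
    obtain r where r: "r \<in> FV.span S" "\<forall>s\<in>S. a r s = a x s" using insert lin_a[OF xW] SW by blast
    have q0W: "q0 \<in> W" and rW: "r\<in>W" using q0 r spS by auto
    have q0e: "\<forall>w\<in>FV.span S. a q0 w = l w" using ext_span[OF l q0W SW] q0 by blast
    have re: "\<forall>w\<in>FV.span S. a r w = a x w" using ext_span[OF lin_a[OF xW] rW SW] r by blast
    define y where "y = x - r"
    have yW: "y \<in> W" using Wdiff xW rW y_def by blast
    have yo: "\<forall>w\<in>FV.span S. a y w = 0"
      using re spS by (simp add: y_def adiffl xW rW subset_iff)
    have spI: "FV.span S \<subseteq> FV.span (insert x S)" by (rule FV.span_mono) auto
    have xsp: "x \<in> FV.span (insert x S)" by (rule FV.span_base) simp
    show "\<exists>q\<in>FV.span (insert x S). \<forall>s\<in>insert x S. a q s = l s"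
    proof (cases "y = 0")
      case True
      then have "x = r" using y_def by simp
      then have "a q0 x = l x" using q0e r by simp
      then show ?thesis using q0 spI by auto
    next
      case False
      have ayy: "a y y > 0" using pos[OF yW False] .
      have ayx: "a y x = a y y"
      proof -
        have "a y y = a y x - a y r" using adiffr[OF xW rW yW] y_def by simp
        moreover have "a y r = 0" using sy[OF yW rW] re r yo by auto
        ultimately show ?thesis by simp
      qed
      define t where "t = (l x - a q0 x) / a y y"
      define q where "q = q0 + fscale t y"
      have "y \<in> FV.span (insert x S)" using y_def xsp spI r FV.span_diff by blast
      then have qsp: "q \<in> FV.span (insert x S)" using q_def FV.span_add FV.span_scale spI q0 by blast
      have "\<forall>s\<in>insert x S. a q s = l s"
      proof
        fix s assume s: "s \<in> insert x S"
        have sW: "s \<in> W" using s xW SW by auto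
        have aq: "a q s = a q0 s + t * a y s" unfolding q_def using bl1[OF q0W yW sW] .
        show "a q s = l s"
        proof (cases "s = x")
          case True
          then show ?thesis using aq ayx ayy by (simp add: t_def)
        next
          case False
          then have "s \<in> S" using s by simp
          then show ?thesis using aq q0 yo FV.span_base[of s S] by simp
        qed
      qed
      then show ?thesis using qsp by blast
    qed
  qed
qed

lemma riesz:
  assumes fin: "finite Bh" "W \<subseteq> FV.span Bh" and l: "lin l"
  shows "\<exists>!q. q \<in> W \<and> (\<forall>w\<in>W. a q w = l w)"
proof -
  obtain B where B: "B \<subseteq> W" "FV.independent B" "W \<subseteq> FV.span B"
    using FV.basis_exists by blast
  have "finite B" using FV.independent_span_bound[OF fin(1) B(2)] B(1) fin(2) by blast
  then obtain q where q: "q \<in> FV.span B" "\<forall>s\<in>B. a q s = l s" using riesz_fin B(1) l by blast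
  have qW: "q \<in> W" using q span_W B by blast
  have all: "\<forall>w\<in>W. a q w = l w" using ext_span[OF l qW B(1) q(2)] B(3) by blast
  show ?thesis
  proof (rule ex1I[of _ q])
    show "q \<in> W \<and> (\<forall>w\<in>W. a q w = l w)" using qW all by blast
    fix p assume p: "p \<in> W \<and> (\<forall>w\<in>W. a p w = l w)"
    have "a (p - q) (p - q) = 0" using p all Wdiff qW by (simp add: adiffl)
    then show "p = q" using pos[of "p - q"] Wdiff p qW by fastforce
  qed
qed

end



lemma L2_prod_int:
  assumes u: "L2_fun \<Omega> u" and v: "L2_fun \<Omega> v"
  shows "integrable (lebesgue_on \<Omega>) (\<lambda>x. u x * v x)"
proof (rule Bochner_Integration.integrable_bound)
  show "integrable (lebesgue_on \<Omega>) (\<lambda>x. (u x)\<^sup>2 + (v x)\<^sup>2)"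
    using u v unfolding L2_fun_def by auto
  show "(\<lambda>x. u x * v x) \<in> borel_measurable (lebesgue_on \<Omega>)"
    using u v unfolding L2_fun_def by auto
  show "AE x in lebesgue_on \<Omega>. norm (u x * v x) \<le> norm ((u x)\<^sup>2 + (v x)\<^sup>2)"
  proof (rule AE_I2)
    fix x
    have "2 * \<bar>u x * v x\<bar> \<le> (u x)\<^sup>2 + (v x)\<^sup>2"
      using sum_squares_bound[of "\<bar>u x\<bar>" "\<bar>v x\<bar>"] by (simp add: abs_mult power2_eq_square)
    moreover have "0 \<le> (u x)\<^sup>2 + (v x)\<^sup>2" by simp
    ultimately show "norm (u x * v x) \<le> norm ((u x)\<^sup>2 + (v x)\<^sup>2)" by simp
  qed
qed

lemma L2_sq_int: "L2_fun \<Omega> u \<Longrightarrow> integrable (lebesgue_on \<Omega>) (\<lambda>x. (u x)\<^sup>2)"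
  by (simp add: L2_fun_def)

lemma L2_sq_nonneg: "0 \<le> integral\<^sup>L (lebesgue_on \<Omega>) (\<lambda>x. ((u::'d::finite fn) x)\<^sup>2)"
  by (rule Bochner_Integration.integral_nonneg_AE) auto

lemma L2_norm_nonneg: "0 \<le> L2_norm \<Omega> u"
  unfolding L2_norm_def using L2_sq_nonneg by simp

lemma L2_expand:
  assumes u: "L2_fun \<Omega> u" and v: "L2_fun \<Omega> v"
  shows "integral\<^sup>L (lebesgue_on \<Omega>) (\<lambda>x. (s * u x + t * v x)\<^sup>2)
     = s\<^sup>2 * integral\<^sup>L (lebesgue_on \<Omega>) (\<lambda>x. (u x)\<^sup>2) + 2 * s * t * integral\<^sup>L (lebesgue_on \<Omega>) (\<lambda>x. u x * v x)
       + t\<^sup>2 * integral\<^sup>L (lebesgue_on \<Omega>) (\<lambda>x. (v x)\<^sup>2)"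
proof -
  have e: "(\<lambda>x. (s * u x + t * v x)\<^sup>2) = (\<lambda>x. (s\<^sup>2 * (u x)\<^sup>2 + (2 * s * t) * (u x * v x)) + t\<^sup>2 * (v x)\<^sup>2)"
    by (auto simp: power2_eq_square algebra_simps)
  have i1: "integrable (lebesgue_on \<Omega>) (\<lambda>x. s\<^sup>2 * (u x)\<^sup>2)" using L2_sq_int[OF u] by simp
  have i2: "integrable (lebesgue_on \<Omega>) (\<lambda>x. (2 * s * t) * (u x * v x))" using L2_prod_int[OF u v] by simp
  have i3: "integrable (lebesgue_on \<Omega>) (\<lambda>x. t\<^sup>2 * (v x)\<^sup>2)" using L2_sq_int[OF v] by simp
  show ?thesis unfolding e
    by (simp add: Bochner_Integration.integral_add[OF Bochner_Integration.integrable_add[OF i1 i2] i3]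
        Bochner_Integration.integral_add[OF i1 i2])
qed

lemma L2_CS:
  assumes u: "L2_fun \<Omega> u" and v: "L2_fun \<Omega> v"
  shows "L2_inner \<Omega> u v \<le> L2_norm \<Omega> u * L2_norm \<Omega> v"
proof -
  define A where "A = integral\<^sup>L (lebesgue_on \<Omega>) (\<lambda>x. (u x)\<^sup>2)"
  define B where "B = integral\<^sup>L (lebesgue_on \<Omega>) (\<lambda>x. (v x)\<^sup>2)"
  define P where "P = integral\<^sup>L (lebesgue_on \<Omega>) (\<lambda>x. u x * v x)"
  have A0: "A \<ge> 0" and B0: "B \<ge> 0" unfolding A_def B_def by (rule L2_sq_nonneg)+
  have q: "0 \<le> t\<^sup>2 * A - 2 * t * P + B" for t
  proof -
    have "0 \<le> integral\<^sup>L (lebesgue_on \<Omega>) (\<lambda>x. (t * u x + (-1) * v x)\<^sup>2)" by (rule L2_sq_nonneg)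
    also have "\<dots> = t\<^sup>2 * A - 2 * t * P + B" unfolding L2_expand[OF u v] A_def B_def P_def by simp
    finally show ?thesis .
  qed
  have "P \<le> sqrt A * sqrt B"
  proof (cases "P \<le> 0")
    case True then show ?thesis using A0 B0 by (smt (verit) real_sqrt_ge_zero mult_nonneg_nonneg)
  next
    case False
    show ?thesis
    proof (cases "A = 0")
      case True
      have "0 \<le> ((B+1)/(2*P))\<^sup>2 * A - 2 * ((B+1)/(2*P)) * P + B" using q by blast
      moreover have "2 * ((B+1)/(2*P)) * P = B + 1" using False by (simp add: field_simps)
      ultimately show ?thesis using True by simp
    next
      case A: False
      then have Ap: "A > 0" using A0 by simp
      have "0 \<le> (P/A)\<^sup>2 * A - 2 * (P/A) * P + B" using q by blast
      also have "\<dots> = B - P\<^sup>2 / A" using Ap by (simp add: field_simps power2_eq_square)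
      finally have "P\<^sup>2 \<le> A * B" using Ap by (simp add: field_simps)
      then have "sqrt (P\<^sup>2) \<le> sqrt (A * B)" by (rule real_sqrt_le_mono)
      then show ?thesis using False by (simp add: real_sqrt_mult)
    qed
  qed
  then show ?thesis unfolding L2_inner_def L2_norm_def A_def B_def P_def .
qed

lemma L2_fun_lin:
  assumes u: "L2_fun \<Omega> u" and v: "L2_fun \<Omega> v"
  shows "L2_fun \<Omega> (\<lambda>x. s * u x + t * v x)"
proof -
  have "integrable (lebesgue_on \<Omega>) (\<lambda>x. (s * u x + t * v x)\<^sup>2)"
  proof -
    have e: "(\<lambda>x. (s * u x + t * v x)\<^sup>2) = (\<lambda>x. (s\<^sup>2 * (u x)\<^sup>2 + (2 * s * t) * (u x * v x)) + t\<^sup>2 * (v x)\<^sup>2)"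
      by (auto simp: power2_eq_square algebra_simps)
    have i1: "integrable (lebesgue_on \<Omega>) (\<lambda>x. s\<^sup>2 * (u x)\<^sup>2)" using L2_sq_int[OF u] by simp
    have i2: "integrable (lebesgue_on \<Omega>) (\<lambda>x. (2 * s * t) * (u x * v x))" using L2_prod_int[OF u v] by simp
    have i3: "integrable (lebesgue_on \<Omega>) (\<lambda>x. t\<^sup>2 * (v x)\<^sup>2)" using L2_sq_int[OF v] by simp
    show ?thesis unfolding e by (rule Bochner_Integration.integrable_add[OF Bochner_Integration.integrable_add[OF i1 i2] i3])
  qed
  moreover have "(\<lambda>x. s * u x + t * v x) \<in> borel_measurable (lebesgue_on \<Omega>)"
    using u v unfolding L2_fun_def by (intro borel_measurable_add borel_measurable_times) auto
  ultimately show ?thesis unfolding L2_fun_def by blast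
qed

lemma L2_tri:
  assumes u: "L2_fun \<Omega> u" and v: "L2_fun \<Omega> v"
  shows "L2_norm \<Omega> (\<lambda>x. u x + t * v x) \<le> L2_norm \<Omega> u + \<bar>t\<bar> * L2_norm \<Omega> v"
proof -
  define A where "A = integral\<^sup>L (lebesgue_on \<Omega>) (\<lambda>x. (u x)\<^sup>2)"
  define B where "B = integral\<^sup>L (lebesgue_on \<Omega>) (\<lambda>x. (v x)\<^sup>2)"
  define P where "P = integral\<^sup>L (lebesgue_on \<Omega>) (\<lambda>x. u x * v x)"
  have A0: "A \<ge> 0" and B0: "B \<ge> 0" unfolding A_def B_def by (rule L2_sq_nonneg)+
  have cs: "\<bar>P\<bar> \<le> sqrt A * sqrt B"
  proof -
    have "P \<le> sqrt A * sqrt B" using L2_CS[OF u v] unfolding L2_inner_def L2_norm_def A_def B_def P_def .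
    moreover have "- P \<le> sqrt A * sqrt B"
    proof -
      have "L2_fun \<Omega> (\<lambda>x. 0 * u x + (-1) * v x)" by (rule L2_fun_lin[OF u v])
      moreover have "(\<lambda>x. 0 * u x + (-1) * v x) = (\<lambda>x. - v x)" by simp
      ultimately have mv: "L2_fun \<Omega> (\<lambda>x. - v x)" by simp
      have "L2_inner \<Omega> u (\<lambda>x. - v x) \<le> L2_norm \<Omega> u * L2_norm \<Omega> (\<lambda>x. - v x)"
        by (rule L2_CS[OF u mv])
      then show ?thesis unfolding L2_inner_def L2_norm_def A_def B_def P_def by simp
    qed
    ultimately show ?thesis by linarith
  qed
  have "integral\<^sup>L (lebesgue_on \<Omega>) (\<lambda>x. (u x + t * v x)\<^sup>2) = A + 2 * t * P + t\<^sup>2 * B"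
    using L2_expand[OF u v, of 1 t] unfolding A_def B_def P_def by (simp only: mult_1 power_one)
  also have "\<dots> \<le> (sqrt A + \<bar>t\<bar> * sqrt B)\<^sup>2"
  proof -
    have "t * P \<le> \<bar>t\<bar> * \<bar>P\<bar>" by (metis abs_ge_self abs_mult)
    also have "\<dots> \<le> \<bar>t\<bar> * (sqrt A * sqrt B)" using cs by (simp add: mult_left_mono)
    finally have tp: "2 * t * P \<le> 2 * (\<bar>t\<bar> * (sqrt A * sqrt B))" by simp
    have "(sqrt A + \<bar>t\<bar> * sqrt B)\<^sup>2 = (sqrt A)\<^sup>2 + 2 * (\<bar>t\<bar> * (sqrt A * sqrt B)) + t\<^sup>2 * (sqrt B)\<^sup>2"
      by (simp add: power2_eq_square algebra_simps)
    also have "\<dots> = A + 2 * (\<bar>t\<bar> * (sqrt A * sqrt B)) + t\<^sup>2 * B" using A0 B0 by simp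
    finally show ?thesis using tp by linarith
  qed
  finally have "sqrt (integral\<^sup>L (lebesgue_on \<Omega>) (\<lambda>x. (u x + t * v x)\<^sup>2)) \<le> sqrt A + \<bar>t\<bar> * sqrt B"
    using A0 B0 real_sqrt_le_mono[of _ "(sqrt A + \<bar>t\<bar> * sqrt B)\<^sup>2"] by simp
  then show ?thesis unfolding L2_norm_def A_def B_def .
qed



lemma spd_sub: "spd W a \<Longrightarrow> FV.subspace W' \<Longrightarrow> W' \<subseteq> W \<Longrightarrow> spd W' a"
  unfolding spd_def by (auto simp: subset_iff)

lemma lin0_gen: "linear_on V L \<Longrightarrow> fsubspace V \<Longrightarrow> L 0 = 0"
proof -
  assume l: "linear_on V L" and s: "fsubspace V"
  have z: "(0::'a fn) \<in> V" using s fzero_eq fsubspace_def by metis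
  have "L (fadd 0 (fscale 1 0)) = fadd (L 0) (fscale 1 (L 0))" using l z unfolding linear_on_def by blast
  then have "L 0 = L 0 + L 0" by (simp add: fadd_eq)
  then show "L 0 = 0" by simp
qed

locale cset =
  fixes \<Omega> :: "(real^'d::finite) set" and TH :: "(real^'d) set set" and Vh :: "'d fn set"
    and IH :: "'d fn \<Rightarrow> 'd fn" and ah :: "'d fn \<Rightarrow> 'd fn \<Rightarrow> real"
    and aT :: "(real^'d) set \<Rightarrow> 'd fn \<Rightarrow> 'd fn \<Rightarrow> real"
  assumes finTH: "finite TH"
  and Vh_sub: "fsubspace Vh" and Vh_fin: "findim Vh"
  and sp: "scalar_product_on Vh ah"
  and IH_lin: "linear_on Vh IH"
  and aT_bil: "\<forall>T\<in>TH. bilinear_on Vh (aT T)"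
  and asum: "\<forall>v\<in>Vh. \<forall>w\<in>Vh. ah v w = (\<Sum>T\<in>TH. aT T v w)"
begin

lemma Vh_FV: "FV.subspace Vh" using fsub_sub[OF Vh_sub] .

lemma spd_Vh: "spd Vh ah"
proof
  show "FV.subspace Vh" by (rule Vh_FV)
  fix u v w c assume "u \<in> Vh" "v \<in> Vh" "w \<in> Vh"
  then show "ah (u + fscale c v) w = ah u w + c * ah v w"
    using sp unfolding scalar_product_on_def bilinear_on_def by (simp add: fadd_eq)
next
  fix u v assume "u \<in> Vh" "v \<in> Vh"
  then show "ah u v = ah v u" using sp unfolding scalar_product_on_def by blast
next
  fix v assume "v \<in> Vh" "v \<noteq> 0"
  then show "0 < ah v v" using sp unfolding scalar_product_on_def by (simp add: fzero_eq)
qed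

interpretation V: spd Vh ah by (rule spd_Vh)

lemma IH0: "IH 0 = 0" using lin0_gen[OF IH_lin Vh_sub] .

lemma IH_add_scale: "u \<in> Vh \<Longrightarrow> v \<in> Vh \<Longrightarrow> IH (u + fscale c v) = IH u + fscale c (IH v)"
  using IH_lin unfolding linear_on_def by (simp add: fadd_eq)

lemma IH_add: "u \<in> Vh \<Longrightarrow> v \<in> Vh \<Longrightarrow> IH (u + v) = IH u + IH v"
  using IH_add_scale[of u v 1] by simp

lemma IH_scale: "v \<in> Vh \<Longrightarrow> IH (fscale c v) = fscale c (IH v)"
  using IH_add_scale[of 0 v c] V.W0 IH0 by simp

lemma IH_diff: "u \<in> Vh \<Longrightarrow> v \<in> Vh \<Longrightarrow> IH (u - v) = IH u - IH v"
  using IH_add_scale[of u v "-1"] by (simp add: fscale_minus1)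

lemma Whloc_sub: "FV.subspace (Wh_loc \<Omega> Vh IH U)"
  unfolding FV.subspace_def
proof (intro conjI ballI allI)
  show "0 \<in> Wh_loc \<Omega> Vh IH U" unfolding Wh_loc_def Wh_def using V.W0 IH0 by (simp add: fzero_eq)
next
  fix x y assume x: "x \<in> Wh_loc \<Omega> Vh IH U" and y: "y \<in> Wh_loc \<Omega> Vh IH U"
  then have "x \<in> Vh" "y \<in> Vh" "IH x = 0" "IH y = 0" unfolding Wh_loc_def Wh_def by (auto simp: fzero_eq)
  moreover have "AE z in lebesgue. z \<in> \<Omega> - U \<longrightarrow> (x + y) z = 0"
  proof -
    have "AE z in lebesgue. z \<in> \<Omega> - U \<longrightarrow> x z = 0" "AE z in lebesgue. z \<in> \<Omega> - U \<longrightarrow> y z = 0"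
      using x y unfolding Wh_loc_def by auto
    then show ?thesis by eventually_elim simp
  qed
  ultimately show "x + y \<in> Wh_loc \<Omega> Vh IH U" unfolding Wh_loc_def Wh_def
    by (simp add: fzero_eq IH_add V.Wadd)
next
  fix c x assume x: "x \<in> Wh_loc \<Omega> Vh IH U"
  then have "x \<in> Vh" "IH x = 0" unfolding Wh_loc_def Wh_def by (auto simp: fzero_eq)
  moreover have "AE z in lebesgue. z \<in> \<Omega> - U \<longrightarrow> (fscale c x) z = 0"
  proof -
    have "AE z in lebesgue. z \<in> \<Omega> - U \<longrightarrow> x z = 0"
      using x unfolding Wh_loc_def by auto
    then show ?thesis by eventually_elim (simp add: fscale_def)
  qed
  ultimately show "fscale c x \<in> Wh_loc \<Omega> Vh IH U" unfolding Wh_loc_def Wh_def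
    by (simp add: fzero_eq IH_scale V.Wscale)
qed

lemma Whloc_Vh: "Wh_loc \<Omega> Vh IH U \<subseteq> Vh" unfolding Wh_loc_def Wh_def by auto

lemma Whloc_Omega: "Wh_loc \<Omega> Vh IH \<Omega> = Wh Vh IH" unfolding Wh_loc_def by auto

lemma loc_corr:
  assumes T: "T \<in> TH" and phi: "\<phi> \<in> Vh"
  shows "loc_corrector (Wh_loc \<Omega> Vh IH U) ah (aT T) \<phi> \<in> Wh_loc \<Omega> Vh IH U
     \<and> (\<forall>w\<in>Wh_loc \<Omega> Vh IH U. ah (loc_corrector (Wh_loc \<Omega> Vh IH U) ah (aT T) \<phi>) w = - aT T \<phi> w)"
proof -
  let ?W = "Wh_loc \<Omega> Vh IH U"
  interpret W: spd ?W ah by (rule spd_sub[OF spd_Vh Whloc_sub Whloc_Vh])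
  obtain B where B: "finite B" "Vh \<subseteq> FV.span B" using findim_span[OF Vh_fin] by blast
  have l: "W.lin (\<lambda>w. - aT T \<phi> w)"
    unfolding W.lin_def using aT_bil T phi Whloc_Vh unfolding bilinear_on_def
    by (auto simp: fadd_eq subset_iff)
  have "\<exists>!q. q \<in> ?W \<and> (\<forall>w\<in>?W. ah q w = - aT T \<phi> w)"
    using W.riesz[OF B(1) _ l] B(2) Whloc_Vh by blast
  from theI'[OF this] show ?thesis unfolding loc_corrector_def .
qed

lemma corr_sum: "corrector \<Omega> TH Vh IH ah aT U \<phi> = (\<Sum>T\<in>TH. loc_corrector (Wh_loc \<Omega> Vh IH (U T)) ah (aT T) \<phi>)"
  unfolding corrector_def by (rule ext) (simp add: sum_fun_app)

lemma Wh_sub: "FV.subspace (Wh Vh IH)" using Whloc_sub[of \<Omega>] Whloc_Omega by simp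

lemma Wh_Vh: "Wh Vh IH \<subseteq> Vh" unfolding Wh_def by auto

lemma corr_Wh: "\<phi> \<in> Vh \<Longrightarrow> corrector \<Omega> TH Vh IH ah aT U \<phi> \<in> Wh Vh IH"
  unfolding corr_sum
proof (rule FV.subspace_sum[OF Wh_sub])
  fix T assume "\<phi> \<in> Vh" "T \<in> TH"
  then have "loc_corrector (Wh_loc \<Omega> Vh IH (U T)) ah (aT T) \<phi> \<in> Wh_loc \<Omega> Vh IH (U T)"
    using loc_corr by blast
  then show "loc_corrector (Wh_loc \<Omega> Vh IH (U T)) ah (aT T) \<phi> \<in> Wh Vh IH" unfolding Wh_loc_def by simp
qed

lemma corr_Vh: "\<phi> \<in> Vh \<Longrightarrow> corrector \<Omega> TH Vh IH ah aT U \<phi> \<in> Vh"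
  using corr_Wh Wh_Vh by blast

lemma a_sum: "finite A \<Longrightarrow> (\<forall>T\<in>A. g T \<in> Vh) \<Longrightarrow> w \<in> Vh \<Longrightarrow> ah (sum g A) w = (\<Sum>T\<in>A. ah (g T) w)"
proof (induction A rule: finite_induct)
  case empty
  have "ah 0 w = 0" using V.a0l empty by blast
  then show ?case by (simp only: sum.empty)
next
  case (insert x F)
  have s: "sum g F \<in> Vh" using insert by (auto intro!: FV.subspace_sum[OF Vh_FV])
  have gx: "g x \<in> Vh" using insert by blast
  have ih: "ah (sum g F) w = (\<Sum>T\<in>F. ah (g T) w)" using insert by blast
  have "ah (g x + sum g F) w = ah (g x) w + ah (sum g F) w" using V.aaddl[OF gx s insert.prems(2)] .
  then show ?case using ih by (simp only: sum.insert[OF insert.hyps])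
qed

lemma corr_orth:
  assumes phi: "\<phi> \<in> Vh" and w: "w \<in> Wh Vh IH"
  shows "ah (corrector \<Omega> TH Vh IH ah aT (\<lambda>T. \<Omega>) \<phi>) w = - ah \<phi> w"
proof -
  have wV: "w \<in> Vh" using w Wh_Vh by blast
  have lc: "\<forall>T\<in>TH. loc_corrector (Wh Vh IH) ah (aT T) \<phi> \<in> Wh Vh IH
     \<and> (\<forall>w\<in>Wh Vh IH. ah (loc_corrector (Wh Vh IH) ah (aT T) \<phi>) w = - aT T \<phi> w)"
    using loc_corr[OF _ phi, of _ \<Omega>] Whloc_Omega by simp
  have "ah (corrector \<Omega> TH Vh IH ah aT (\<lambda>T. \<Omega>) \<phi>) w
      = (\<Sum>T\<in>TH. ah (loc_corrector (Wh Vh IH) ah (aT T) \<phi>) w)"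
  proof -
    have gV: "\<forall>T\<in>TH. loc_corrector (Wh Vh IH) ah (aT T) \<phi> \<in> Vh" using lc Wh_Vh by blast
    show ?thesis unfolding corr_sum Whloc_Omega by (rule a_sum[OF finTH gV wV])
  qed
  also have "\<dots> = (\<Sum>T\<in>TH. - aT T \<phi> w)" using lc w by simp
  also have "\<dots> = - ah \<phi> w" using asum phi wV by (simp add: sum_negf)
  finally show ?thesis .
qed

end



lemma nrm_nonneg: "norm_on V n \<Longrightarrow> v \<in> V \<Longrightarrow> 0 \<le> n v"
  unfolding norm_on_def by blast

lemma nrm_add: "norm_on V n \<Longrightarrow> u \<in> V \<Longrightarrow> v \<in> V \<Longrightarrow> n (u + v) \<le> n u + n v"
  unfolding norm_on_def by (simp add: fadd_eq)

lemma nrm_neg: "norm_on V n \<Longrightarrow> v \<in> V \<Longrightarrow> n (- v) = n v"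
  unfolding norm_on_def by (metis abs_minus_cancel abs_one fscale_minus1 mult_1)

lemma nrm_diff:
  assumes "norm_on V n" "FV.subspace V" "u \<in> V" "v \<in> V"
  shows "n (u - v) \<le> n u + n v"
proof -
  have "- v \<in> V" using assms FV.subspace_scale[of V v "-1"] by (simp add: fscale_minus1)
  then have "n (u + - v) \<le> n u + n (- v)" using nrm_add assms by blast
  then show ?thesis using nrm_neg[OF assms(1) assms(4)] by simp
qed

lemma nrm_swap:
  assumes "norm_on V n" "FV.subspace V" "u \<in> V" "v \<in> V"
  shows "n (u - v) = n (v - u)"
proof -
  have "u - v \<in> V" using assms FV.subspace_diff by blast
  then have "n (- (u - v)) = n (u - v)" using nrm_neg assms(1) by blast
  then show ?thesis by simp
qed

lemma quad_bound:
  fixes a x y :: real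
  assumes "0 < a" "0 \<le> x" "a * x\<^sup>2 \<le> y * x" "0 \<le> y"
  shows "x \<le> y / a"
proof (cases "x = 0")
  case True
  then show ?thesis using assms by simp
next
  case False
  then have "x > 0" using assms by simp
  then have "a * x \<le> y" using assms by (simp add: power2_eq_square mult.assoc[symmetric])
  then show ?thesis using assms by (simp add: field_simps)
qed

lemma L2_fdiff_tri:
  assumes "L2_fun \<Omega> u" "L2_fun \<Omega> v"
  shows "L2_norm \<Omega> (u - v) \<le> L2_norm \<Omega> u + L2_norm \<Omega> v"
proof -
  have "L2_norm \<Omega> (\<lambda>x. u x + (-1) * v x) \<le> L2_norm \<Omega> u + \<bar>-1\<bar> * L2_norm \<Omega> v"
    by (rule L2_tri[OF assms])
  moreover have "(\<lambda>x. u x + (-1) * v x) = u - v" by (auto simp: fun_diff_def)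
  ultimately show ?thesis by simp
qed

lemma L2_fadd_tri:
  assumes "L2_fun \<Omega> u" "L2_fun \<Omega> v"
  shows "L2_norm \<Omega> (u + v) \<le> L2_norm \<Omega> u + L2_norm \<Omega> v"
proof -
  have "L2_norm \<Omega> (\<lambda>x. u x + 1 * v x) \<le> L2_norm \<Omega> u + \<bar>1\<bar> * L2_norm \<Omega> v"
    by (rule L2_tri[OF assms])
  moreover have "(\<lambda>x. u x + 1 * v x) = u + v" by (auto simp: plus_fun_def)
  ultimately show ?thesis by simp
qed

lemma L2_norm_neg: "L2_norm \<Omega> (- u) = L2_norm \<Omega> u"
  unfolding L2_norm_def by simp


context cset
begin

interpretation V: spd Vh ah by (rule spd_Vh)

lemma main:
  fixes VH :: "'d fn set" and nh nH :: "'d fn \<Rightarrow> real" and f uh uLOD :: "'d fn"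
    and k p :: nat and H D CI CIinv C8 \<alpha> \<beta> \<theta> :: real
  assumes VH: "fsubspace VH" "VH \<subseteq> Vh"
  and L2V: "\<forall>v\<in>Vh. L2_fun \<Omega> v"
  and nh: "norm_on Vh nh" and coer: "\<forall>v\<in>Vh. \<alpha> * (nh v)\<^sup>2 \<le> ah v v"
  and bnd: "\<forall>v\<in>Vh. \<forall>w\<in>Vh. ah v w \<le> \<beta> * nh v * nh w"
  and nH: "norm_on VH nH"
  and IHVH: "\<forall>v\<in>Vh. IH v \<in> VH"
  and I1: "\<forall>v\<in>Vh. L2_norm \<Omega> (fdiff v (IH v)) \<le> CI * H * nh v"
  and I2: "\<forall>v\<in>Vh. nH (IH v) \<le> CI * nh v"
  and I3: "\<forall>v\<in>VH. L2_norm \<Omega> (fdiff v (IH v)) \<le> CI * H * nH v"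
  and I4: "\<forall>v\<in>VH. L2_norm \<Omega> (IH v) \<le> CI * nH v"
  and bij: "bij_betw IH VH VH"
  and Iinv: "\<forall>v\<in>VH. nH (inv_into VH IH v) \<le> CIinv * nH v"
  and A8: "\<forall>\<Phi>\<in>VH.
         (nh (fdiff (corrector \<Omega> TH Vh IH ah aT (patch TH k) \<Phi>)
                    (corrector \<Omega> TH Vh IH ah aT (\<lambda>T. \<Omega>) \<Phi>)))\<^sup>2
         \<le> C8 * real k ^ CARD('d) * \<theta> ^ (2 * k) * (1 / H) ^ (2 * p)
              * (nh (fadd \<Phi> (corrector \<Omega> TH Vh IH ah aT (\<lambda>T. \<Omega>) \<Phi>)))\<^sup>2"
  and f: "L2_fun \<Omega> f"
  and uh: "uh \<in> Vh" "\<forall>v\<in>Vh. ah uh v = L2_inner \<Omega> f v"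
  and k: "k \<ge> 1"
  and uL: "uLOD \<in> Vms \<Omega> TH Vh VH IH ah aT (patch TH k)"
     "\<forall>\<Phi>\<in>Vms \<Omega> TH Vh VH IH ah aT (patch TH k). ah uLOD \<Phi> = L2_inner \<Omega> f \<Phi>"
  and H: "0 \<le> H" "H \<le> D"
  and ab: "0 < \<alpha>" "\<alpha> \<le> \<beta>" and th: "0 < \<theta>"
  shows "L2_norm \<Omega> (fdiff uh (inv_into VH IH (IH uLOD))) + nh (fdiff uh uLOD)
    \<le> (\<bar>CI\<bar> * (1 + \<bar>CIinv\<bar> * \<bar>CI\<bar>) * (\<bar>CI\<bar> * D + \<bar>CI\<bar> * \<bar>CI\<bar> * (D + 1)) / \<alpha>
         + (\<bar>CI\<bar> * (D + 1) * \<bar>CIinv\<bar> * \<bar>CI\<bar> + 1) * (\<beta> / \<alpha>) * (\<bar>CI\<bar> / \<alpha>)) * H * L2_norm \<Omega> f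
     + ((\<bar>CI\<bar> * (D + 1) * \<bar>CIinv\<bar> * \<bar>CI\<bar> + 1) * (\<beta> / \<alpha>) * sqrt \<bar>C8\<bar>
          * ((\<bar>CI\<bar> * D + \<bar>CI\<bar> * \<bar>CI\<bar> * (D + 1)) + \<bar>CI\<bar> * D) / \<alpha>)
       * ((1 / H) ^ p * real k powr (real CARD('d) / 2) * \<theta> ^ k) * L2_norm \<Omega> f"
proof -
  define c where "c = \<bar>CI\<bar>"
  define ci where "ci = \<bar>CIinv\<bar>"
  define c8 where "c8 = sqrt \<bar>C8\<bar>"
  define Cp where "Cp = c * D + c * c * (D + 1)"
  define F where "F = L2_norm \<Omega> f"
  define X where "X = (1 / H) ^ p * real k powr (real CARD('d) / 2) * \<theta> ^ k"
  have c0: "c \<ge> 0" "ci \<ge> 0" "c8 \<ge> 0" unfolding c_def ci_def c8_def by auto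
  have D0: "D \<ge> 0" using H by simp
  have Cp0: "Cp \<ge> 0" unfolding Cp_def using c0 D0 by simp
  have F0: "F \<ge> 0" unfolding F_def by (rule L2_norm_nonneg)
  have X0: "X \<ge> 0" unfolding X_def using th H by simp
  have VHV: "\<And>v. v \<in> VH \<Longrightarrow> v \<in> Vh" using VH by blast
  have VHs: "FV.subspace VH" using fsub_sub[OF VH(1)] .
  have nhp: "\<And>v. v \<in> Vh \<Longrightarrow> 0 \<le> nh v" using nrm_nonneg[OF nh] .
  have nHp: "\<And>v. v \<in> VH \<Longrightarrow> 0 \<le> nH v" using nrm_nonneg[OF nH] .
  have L2: "\<And>v. v \<in> Vh \<Longrightarrow> L2_fun \<Omega> v" using L2V by blast
  have PH: "L2_norm \<Omega> v \<le> c * (D + 1) * nH v" if v: "v \<in> VH" for v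
  proof -
    have vV: "v \<in> Vh" and Iv: "IH v \<in> Vh" using v VHV IHVH by auto
    have "v = (v - IH v) + IH v" by simp
    then have "L2_norm \<Omega> v \<le> L2_norm \<Omega> (v - IH v) + L2_norm \<Omega> (IH v)"
      using L2_fadd_tri[OF L2[OF V.Wdiff[OF vV Iv]] L2[OF Iv]] by simp
    also have "\<dots> \<le> CI * H * nH v + CI * nH v" using I3 I4 v by (simp add: fdiff_eq add_mono)
    also have "\<dots> \<le> c * D * nH v + c * nH v"
    proof -
      have "CI * H * nH v \<le> c * H * nH v" using nHp[OF v] H c_def by (simp add: mult_right_mono)
      also have "\<dots> \<le> c * D * nH v" using nHp[OF v] H c0 by (simp add: mult_right_mono mult_left_mono)
      finally show ?thesis using nHp[OF v] c_def by (smt (verit) abs_ge_self mult_right_mono)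
    qed
    finally show ?thesis by (simp add: algebra_simps)
  qed
  have Ph: "L2_norm \<Omega> v \<le> Cp * nh v" if v: "v \<in> Vh" for v
  proof -
    have Iv: "IH v \<in> Vh" "IH v \<in> VH" using v IHVH VHV by auto
    have "v = (v - IH v) + IH v" by simp
    then have "L2_norm \<Omega> v \<le> L2_norm \<Omega> (v - IH v) + L2_norm \<Omega> (IH v)"
      using L2_fadd_tri[OF L2[OF V.Wdiff[OF v Iv(1)]] L2[OF Iv(1)]] by simp
    also have "\<dots> \<le> c * D * nh v + c * (D + 1) * (c * nh v)"
    proof (rule add_mono)
      have "L2_norm \<Omega> (v - IH v) \<le> CI * H * nh v" using I1 v by (simp add: fdiff_eq)
      also have "\<dots> \<le> c * D * nh v"
        using nhp[OF v] H c0 unfolding c_def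
        by (smt (verit) abs_ge_self mult_right_mono mult_left_mono mult_nonneg_nonneg)
      finally show "L2_norm \<Omega> (v - IH v) \<le> c * D * nh v" .
      have "nH (IH v) \<le> c * nh v" using I2 v nhp[OF v] c_def by (smt (verit) abs_ge_self mult_right_mono)
      then show "L2_norm \<Omega> (IH v) \<le> c * (D + 1) * (c * nh v)"
        using PH[OF Iv(2)] c0 D0 by (smt (verit) mult_left_mono mult_nonneg_nonneg)
    qed
    also have "\<dots> = Cp * nh v" unfolding Cp_def by (simp add: algebra_simps)
    finally show ?thesis .
  qed
  have CSf: "L2_inner \<Omega> f v \<le> F * L2_norm \<Omega> v" if "v \<in> Vh" for v
    unfolding F_def using L2_CS[OF f L2[OF that]] .
  have nuh: "nh uh \<le> Cp * F / \<alpha>"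
  proof -
    have "\<alpha> * (nh uh)\<^sup>2 \<le> ah uh uh" using coer uh by blast
    also have "\<dots> = L2_inner \<Omega> f uh" using uh by blast
    also have "\<dots> \<le> F * L2_norm \<Omega> uh" using CSf uh by blast
    also have "\<dots> \<le> F * (Cp * nh uh)" using Ph[OF uh(1)] F0 by (simp add: mult_left_mono)
    finally have "\<alpha> * (nh uh)\<^sup>2 \<le> (Cp * F) * nh uh" by (simp add: algebra_simps)
    from quad_bound[OF ab(1) nhp[OF uh(1)] this] show ?thesis using Cp0 F0 by simp
  qed
  have IHuh: "IH uh \<in> VH" using IHVH uh by blast
  define Phi where "Phi = inv_into VH IH (IH uh)"
  have PhiVH: "Phi \<in> VH" unfolding Phi_def using bij IHuh by (metis bij_betw_imp_surj_on inv_into_into)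
  have PhiV: "Phi \<in> Vh" using PhiVH VHV by blast
  have IHPhi: "IH Phi = IH uh" unfolding Phi_def using bij IHuh by (metis bij_betw_imp_surj_on f_inv_into_f)
  define QO where "QO = corrector \<Omega> TH Vh IH ah aT (\<lambda>T. \<Omega>) Phi"
  define Qk where "Qk = corrector \<Omega> TH Vh IH ah aT (patch TH k) Phi"
  have QOW: "QO \<in> Wh Vh IH" unfolding QO_def using corr_Wh[OF PhiV] .
  have QOV: "QO \<in> Vh" using QOW Wh_Vh by blast
  have QkV: "Qk \<in> Vh" unfolding Qk_def using corr_Vh[OF PhiV] .
  have IHQO: "IH QO = 0" using QOW unfolding Wh_def by (simp add: fzero_eq)
  define uO where "uO = Phi + QO"
  have uOV: "uO \<in> Vh" unfolding uO_def using V.Wadd PhiV QOV by blast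
  define w where "w = uh - uO"
  have wV: "w \<in> Vh" unfolding w_def using V.Wdiff uh uOV by blast
  have IHw: "IH w = 0" unfolding w_def uO_def
    using IH_diff[OF uh(1) uOV] IH_add[OF PhiV QOV] IHPhi IHQO uO_def by simp
  have wW: "w \<in> Wh Vh IH" unfolding Wh_def using wV IHw by (simp add: fzero_eq)
  have auOw: "ah uO w = 0"
    unfolding uO_def using V.aaddl[OF PhiV QOV wV] corr_orth[OF PhiV wW] QO_def by simp
  have nw: "nh w \<le> c * H * F / \<alpha>"
  proof -
    have "\<alpha> * (nh w)\<^sup>2 \<le> ah w w" using coer wV by blast
    also have "\<dots> = ah uh w - ah uO w" unfolding w_def using V.adiffl[OF uh(1) uOV] wV w_def by simp
    also have "\<dots> = L2_inner \<Omega> f w" using uh wV auOw by simp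
    also have "\<dots> \<le> F * L2_norm \<Omega> w" using CSf wV by blast
    also have "\<dots> \<le> F * (c * H * nh w)"
    proof -
      have "L2_norm \<Omega> w = L2_norm \<Omega> (fdiff w (IH w))" using IHw by (simp add: fdiff_eq)
      also have "\<dots> \<le> CI * H * nh w" using I1 wV by blast
      also have "\<dots> \<le> c * H * nh w" using nhp[OF wV] H c_def
        by (smt (verit) abs_ge_self mult_right_mono mult_nonneg_nonneg)
      finally show ?thesis using F0 by (simp add: mult_left_mono)
    qed
    finally have "\<alpha> * (nh w)\<^sup>2 \<le> (c * H * F) * nh w" by (simp add: algebra_simps)
    from quad_bound[OF ab(1) nhp[OF wV] this] show ?thesis using c0 H F0 by simp
  qed
  have nuO: "nh uO \<le> (Cp + c * D) * F / \<alpha>"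
  proof -
    have "uO = uh - w" unfolding w_def by simp
    then have "nh uO \<le> nh uh + nh w" using nrm_diff[OF nh Vh_FV uh(1) wV] by simp
    also have "\<dots> \<le> Cp * F / \<alpha> + c * H * F / \<alpha>" using nuh nw by simp
    also have "\<dots> \<le> Cp * F / \<alpha> + c * D * F / \<alpha>"
      using H c0 F0 ab by (simp add: divide_right_mono mult_right_mono mult_left_mono)
    finally show ?thesis by (simp add: algebra_simps add_divide_distrib)
  qed
  have nQ: "nh (Qk - QO) \<le> c8 * X * nh uO"
  proof -
    have kpos: "real k > 0" using k by simp
    have Xsq: "X\<^sup>2 = real k ^ CARD('d) * \<theta> ^ (2 * k) * (1 / H) ^ (2 * p)"
    proof -
      have "(real k powr (real CARD('d) / 2))\<^sup>2 = real k powr (real CARD('d))"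
        using kpos by (simp add: powr_powr[symmetric] power2_eq_square powr_add[symmetric])
      also have "\<dots> = real k ^ CARD('d)" using kpos by (simp add: powr_realpow)
      finally show ?thesis unfolding X_def by (simp add: power_mult_distrib power_mult[symmetric] mult.commute)
    qed
    have "(nh (Qk - QO))\<^sup>2 \<le> C8 * X\<^sup>2 * (nh uO)\<^sup>2"
      using A8 PhiVH unfolding Xsq Qk_def QO_def uO_def by (simp add: fdiff_eq fadd_eq mult.assoc)
    also have "\<dots> \<le> (c8 * X * nh uO)\<^sup>2"
    proof -
      have "C8 * (X\<^sup>2 * (nh uO)\<^sup>2) \<le> \<bar>C8\<bar> * (X\<^sup>2 * (nh uO)\<^sup>2)" by (rule mult_right_mono) auto
      moreover have "(c8 * X * nh uO)\<^sup>2 = \<bar>C8\<bar> * (X\<^sup>2 * (nh uO)\<^sup>2)"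
        unfolding c8_def by (simp only: power_mult_distrib real_sqrt_pow2[OF abs_ge_zero] mult.assoc)
      ultimately show ?thesis by (simp only: mult.assoc)
    qed
    finally have sq: "(nh (Qk - QO))\<^sup>2 \<le> (c8 * X * nh uO)\<^sup>2" .
    have "0 \<le> c8 * X * nh uO" using c0 X0 nhp[OF uOV] by simp
    then show ?thesis by (rule power2_le_imp_le[OF sq])
  qed
  define v where "v = Phi + Qk"
  have vVms: "v \<in> Vms \<Omega> TH Vh VH IH ah aT (patch TH k)"
    unfolding Vms_def v_def Qk_def using PhiVH by (auto simp: fadd_eq)
  have vV: "v \<in> Vh" unfolding v_def using V.Wadd PhiV QkV by blast
  have uLV: "uLOD \<in> Vh" using uL(1) unfolding Vms_def using corr_Vh VHV V.Wadd by (auto simp: fadd_eq)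
  define E where "E = nh (uh - v)"
  have nE: "E \<le> c * H * F / \<alpha> + c8 * X * ((Cp + c * D) * F / \<alpha>)"
  proof -
    have "uh - v = w + (QO - Qk)" unfolding w_def uO_def v_def by simp
    then have "E \<le> nh w + nh (QO - Qk)" unfolding E_def using nrm_add[OF nh wV V.Wdiff[OF QOV QkV]] by simp
    also have "nh (QO - Qk) = nh (Qk - QO)" using nrm_swap[OF nh Vh_FV QOV QkV] .
    also have "nh w + nh (Qk - QO) \<le> c * H * F / \<alpha> + c8 * X * ((Cp + c * D) * F / \<alpha>)"
      using nw nQ nuO c0 X0 by (smt (verit) mult_left_mono mult_nonneg_nonneg)
    finally show ?thesis .
  qed
  define e where "e = uh - uLOD"
  have eV: "e \<in> Vh" unfolding e_def using V.Wdiff uh uLV by blast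
  have ne: "nh e \<le> (\<beta> / \<alpha>) * E"
  proof -
    have orth: "ah e (v - uLOD) = 0"
    proof -
      have "ah e (v - uLOD) = ah e v - ah e uLOD" using V.adiffr[OF vV uLV eV] .
      also have "\<dots> = (ah uh v - ah uLOD v) - (ah uh uLOD - ah uLOD uLOD)"
        unfolding e_def using V.adiffl uh uLV vV by simp
      also have "\<dots> = 0" using uh uL vVms uLV vV by simp
      finally show ?thesis .
    qed
    have "\<alpha> * (nh e)\<^sup>2 \<le> ah e e" using coer eV by blast
    also have "e = (uh - v) + (v - uLOD)" unfolding e_def by simp
    then have "ah e e = ah e (uh - v) + ah e (v - uLOD)"
      using V.aaddr[OF V.Wdiff[OF uh(1) vV] V.Wdiff[OF vV uLV] eV] by simp
    also have "\<dots> = ah e (uh - v)" using orth by simp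
    also have "\<dots> \<le> \<beta> * nh e * E" unfolding E_def using bnd eV V.Wdiff[OF uh(1) vV] by blast
    finally have "\<alpha> * (nh e)\<^sup>2 \<le> (\<beta> * E) * nh e" by (simp add: algebra_simps)
    have "0 \<le> \<beta> * E" unfolding E_def using ab nhp V.Wdiff[OF uh(1) vV] by simp
    from quad_bound[OF ab(1) nhp[OF eV] \<open>\<alpha> * (nh e)\<^sup>2 \<le> (\<beta> * E) * nh e\<close> this] show ?thesis by simp
  qed
  define J where "J = inv_into VH IH"
  have inj: "inj_on IH VH" using bij bij_betw_imp_inj_on by blast
  have surj: "IH ` VH = VH" using bij bij_betw_imp_surj_on by blast
  have JVH: "\<And>a. a \<in> VH \<Longrightarrow> J a \<in> VH" unfolding J_def using surj by (metis inv_into_into)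
  have IJ: "\<And>a. a \<in> VH \<Longrightarrow> IH (J a) = a" unfolding J_def using surj by (metis f_inv_into_f)
  have JI: "\<And>z. z \<in> VH \<Longrightarrow> J (IH z) = z" unfolding J_def using inj by (metis inv_into_f_f)
  have Jdiff: "J (a - b) = J a - J b" if "a \<in> VH" "b \<in> VH" for a b
  proof -
    have zz: "J a - J b \<in> VH" using FV.subspace_diff[OF VHs JVH[OF that(1)] JVH[OF that(2)]] .
    have "IH (J a - J b) = a - b" using IH_diff[OF VHV[OF JVH[OF that(1)]] VHV[OF JVH[OF that(2)]]] IJ that by simp
    then show ?thesis using JI[OF zz] by simp
  qed
  have IHuL: "IH uLOD \<in> VH" using IHVH uLV by blast
  have IHe: "IH e = IH uh - IH uLOD" unfolding e_def using IH_diff[OF uh(1) uLV] .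
  have IHeVH: "IH e \<in> VH" using IHVH eV by blast
  have g1: "L2_norm \<Omega> (uh - Phi) \<le> c * H * (1 + ci * c) * nh uh"
  proof -
    have a1: "uh - IH uh \<in> Vh" using V.Wdiff[OF uh(1)] IHVH uh VHV by blast
    have a2: "IH Phi - Phi \<in> Vh" using V.Wdiff[OF _ PhiV] IHVH PhiV VHV by blast
    have "uh - Phi = (uh - IH uh) + (IH Phi - Phi)" using IHPhi by simp
    then have "L2_norm \<Omega> (uh - Phi) \<le> L2_norm \<Omega> (uh - IH uh) + L2_norm \<Omega> (IH Phi - Phi)"
      using L2_fadd_tri[OF L2[OF a1] L2[OF a2]] by simp
    also have "L2_norm \<Omega> (IH Phi - Phi) = L2_norm \<Omega> (Phi - IH Phi)"
      using L2_norm_neg[of \<Omega> "Phi - IH Phi"] by simp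
    also have "L2_norm \<Omega> (uh - IH uh) + L2_norm \<Omega> (Phi - IH Phi) \<le> c * H * nh uh + c * H * (ci * (c * nh uh))"
    proof (rule add_mono)
      show "L2_norm \<Omega> (uh - IH uh) \<le> c * H * nh uh" using I1 uh nhp[OF uh(1)] H unfolding c_def
        by (smt (verit, best) abs_ge_self fdiff_eq mult_nonneg_nonneg mult_right_mono)
      have "nH Phi \<le> ci * (c * nh uh)"
      proof -
        have "nH Phi \<le> CIinv * nH (IH uh)" using Iinv IHuh unfolding Phi_def by blast
        also have "\<dots> \<le> ci * nH (IH uh)" unfolding ci_def using nHp[OF IHuh]
          by (simp add: mult_right_mono)
        also have "\<dots> \<le> ci * (c * nh uh)" using I2 uh c0 nhp[OF uh(1)] unfolding c_def
          by (smt (verit) abs_ge_self mult_left_mono mult_right_mono)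
        finally show ?thesis .
      qed
      moreover have "L2_norm \<Omega> (Phi - IH Phi) \<le> c * H * nH Phi" using I3 PhiVH nHp[OF PhiVH] H unfolding c_def
        by (smt (verit, best) abs_ge_self fdiff_eq mult_nonneg_nonneg mult_right_mono)
      ultimately show "L2_norm \<Omega> (Phi - IH Phi) \<le> c * H * (ci * (c * nh uh))"
        using c0 H by (smt (verit) mult_left_mono mult_nonneg_nonneg)
    qed
    finally have "L2_norm \<Omega> (uh - Phi) \<le> c * H * nh uh + c * H * (ci * (c * nh uh))" .
    moreover have "c * H * nh uh + c * H * (ci * (c * nh uh)) = c * H * (1 + ci * c) * nh uh"
      by (simp add: algebra_simps)
    ultimately show ?thesis by linarith
  qed
  have g2: "L2_norm \<Omega> (Phi - J (IH uLOD)) \<le> c * (D + 1) * ci * c * nh e"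
  proof -
    have "Phi - J (IH uLOD) = J (IH e)" unfolding IHe Phi_def J_def[symmetric]
      using Jdiff[OF IHuh IHuL] by simp
    then have "L2_norm \<Omega> (Phi - J (IH uLOD)) \<le> c * (D + 1) * nH (J (IH e))" using PH[OF JVH[OF IHeVH]] by simp
    also have "nH (J (IH e)) \<le> ci * (c * nh e)"
    proof -
      have "nH (J (IH e)) \<le> CIinv * nH (IH e)" using Iinv IHeVH unfolding J_def by blast
      also have "\<dots> \<le> ci * nH (IH e)" unfolding ci_def using nHp[OF IHeVH] by (simp add: mult_right_mono)
      also have "\<dots> \<le> ci * (c * nh e)" using I2 eV c0 nhp[OF eV] unfolding c_def
        by (smt (verit) abs_ge_self mult_left_mono mult_right_mono)
      finally show ?thesis .
    qed
    then have "c * (D + 1) * nH (J (IH e)) \<le> c * (D + 1) * (ci * (c * nh e))"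
      using c0 D0 by (simp add: mult_left_mono)
    finally show ?thesis by (simp add: algebra_simps)
  qed
  have L2e: "L2_norm \<Omega> (fdiff uh (inv_into VH IH (IH uLOD))) \<le> c * H * (1 + ci * c) * nh uh + c * (D + 1) * ci * c * nh e"
  proof -
    have b1: "uh - Phi \<in> Vh" using V.Wdiff uh PhiV by blast
    have b2: "Phi - J (IH uLOD) \<in> Vh" using V.Wdiff PhiV VHV JVH IHuL by blast
    have "fdiff uh (inv_into VH IH (IH uLOD)) = (uh - Phi) + (Phi - J (IH uLOD))"
      unfolding J_def by (simp add: fdiff_eq)
    then have "L2_norm \<Omega> (fdiff uh (inv_into VH IH (IH uLOD))) \<le> L2_norm \<Omega> (uh - Phi) + L2_norm \<Omega> (Phi - J (IH uLOD))"
      using L2_fadd_tri[OF L2[OF b1] L2[OF b2]] by simp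
    then show ?thesis using g1 g2 by simp
  qed
  have cuh: "c * H * (1 + ci * c) * nh uh \<le> c * (1 + ci * c) * Cp / \<alpha> * H * F"
  proof -
    have "c * H * (1 + ci * c) * nh uh \<le> c * H * (1 + ci * c) * (Cp * F / \<alpha>)"
    proof -
      have "0 \<le> c * H * (1 + ci * c)" using c0 H by simp
      from mult_left_mono[OF nuh this] show ?thesis .
    qed
    moreover have "c * H * (1 + ci * c) * (Cp * F / \<alpha>) = c * (1 + ci * c) * Cp / \<alpha> * H * F"
      by (simp add: divide_inverse mult_ac)
    ultimately show ?thesis by linarith
  qed
  define a2 where "a2 = c * (D + 1) * ci * c"
  have a20: "a2 \<ge> 0" unfolding a2_def using c0 D0 by simp
  have ba: "\<beta> / \<alpha> \<ge> 0" using ab by simp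
  have an: "\<alpha> \<noteq> 0" using ab by simp
  have s1: "(a2 + 1) * nh e \<le> (a2 + 1) * ((\<beta> / \<alpha>) * E)"
    by (rule mult_left_mono[OF ne]) (use a20 in simp)
  have s2: "(a2 + 1) * ((\<beta> / \<alpha>) * E) \<le> (a2 + 1) * ((\<beta> / \<alpha>) * (c * H * F / \<alpha> + c8 * X * ((Cp + c * D) * F / \<alpha>)))"
    by (rule mult_left_mono[OF mult_left_mono[OF nE ba]]) (use a20 in simp)
  have s3: "(a2 + 1) * ((\<beta> / \<alpha>) * (c * H * F / \<alpha> + c8 * X * ((Cp + c * D) * F / \<alpha>)))
     = (a2 + 1) * (\<beta> / \<alpha>) * (c / \<alpha>) * H * F + (a2 + 1) * (\<beta> / \<alpha>) * c8 * (Cp + c * D) / \<alpha> * X * F"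
    using an by (simp add: field_simps)
  have cne: "(a2 + 1) * nh e \<le> (a2 + 1) * (\<beta> / \<alpha>) * (c / \<alpha>) * H * F
       + (a2 + 1) * (\<beta> / \<alpha>) * c8 * (Cp + c * D) / \<alpha> * X * F"
    using s1 s2 s3 by linarith
  have ee: "nh (fdiff uh uLOD) = nh e" by (simp add: e_def fdiff_eq)
  have a2e: "(a2 + 1) * nh e = c * (D + 1) * ci * c * nh e + nh e" by (simp add: a2_def algebra_simps)
  have dist: "(c * (1 + ci * c) * Cp / \<alpha> + (a2 + 1) * (\<beta> / \<alpha>) * (c / \<alpha>)) * H * F
      = c * (1 + ci * c) * Cp / \<alpha> * H * F + (a2 + 1) * (\<beta> / \<alpha>) * (c / \<alpha>) * H * F"
    by (simp only: distrib_right)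
  have fin: "L2_norm \<Omega> (fdiff uh (inv_into VH IH (IH uLOD))) + nh (fdiff uh uLOD)
      \<le> (c * (1 + ci * c) * Cp / \<alpha> + (a2 + 1) * (\<beta> / \<alpha>) * (c / \<alpha>)) * H * F
        + ((a2 + 1) * (\<beta> / \<alpha>) * c8 * (Cp + c * D) / \<alpha>) * X * F"
    using L2e cuh cne ee a2e dist by linarith
  then show ?thesis unfolding c_def ci_def c8_def Cp_def F_def X_def a2_def .
qed

end



lemma mesh_bounds:
  assumes m: "conforming_mesh \<Omega> TH" and b: "bounded \<Omega>"
  shows "0 \<le> mesh_size TH" "mesh_size TH \<le> diameter \<Omega>"
proof -
  have fin: "finite TH" "TH \<noteq> {}" and U: "\<Union>TH = closure \<Omega>" using m unfolding conforming_mesh_def by auto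
  have bc: "bounded (closure \<Omega>)" by (rule bounded_closure[OF b])
  have sub: "K \<subseteq> closure \<Omega>" if "K \<in> TH" for K using U that by blast
  have dK: "0 \<le> diameter K \<and> diameter K \<le> diameter \<Omega>" if "K \<in> TH" for K
    using diameter_ge_0[OF bounded_subset[OF bc sub[OF that]]] diameter_subset[OF sub[OF that] bc]
      diameter_closure[OF b] by simp
  obtain K where K: "K \<in> TH" using fin by blast
  have "diameter K \<le> mesh_size TH" unfolding mesh_size_def using fin K by (simp add: Max_ge_iff)
  then show "0 \<le> mesh_size TH" using dK[OF K] by simp
  show "mesh_size TH \<le> diameter \<Omega>" unfolding mesh_size_def using fin dK by (simp add: Max_le_iff)
qed

theorem theorem3p1:
  fixes \<Omega> :: "(real^'d) set"
    and \<rho> \<alpha> \<beta> CI CIinv C8 \<theta> :: real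
    and p :: nat
  assumes dim: "CARD('d) \<in> {1, 2, 3}"
    and dom: "open \<Omega>" "bounded \<Omega>" "connected \<Omega>" "\<Omega> \<noteq> {}"
    and ab: "0 < \<alpha>" "\<alpha> \<le> \<beta>"
    and th: "0 < \<theta>" "\<theta> < 1"
    and p01: "p \<in> {0, 1}"
  shows "\<exists>C. \<forall>(\<T>H :: (real^'d) set set) \<T>h Vh VH ah aH nh nH IH aT f uh uLOD (k :: nat).
    ( \<comment> \<open>meshes\<close>
      conforming_mesh \<Omega> \<T>H \<and> conforming_mesh \<Omega> \<T>h \<and>
      shape_regular \<rho> \<T>H \<and> shape_regular \<rho> \<T>h \<and>
      refines \<T>h \<T>H \<and> mesh_size \<T>h < mesh_size \<T>H / 2 \<and>
      \<comment> \<open>(A4)/(A6)\<close>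
      fsubspace Vh \<and> findim Vh \<and> (\<forall>v\<in>Vh. L2_fun \<Omega> v) \<and>
      fsubspace VH \<and> VH \<subseteq> Vh \<and>
      scalar_product_on Vh ah \<and> scalar_product_on VH aH \<and>
      \<comment> \<open>(A5)\<close>
      norm_on Vh nh \<and>
      (\<forall>v\<in>Vh. \<alpha> * (nh v)\<^sup>2 \<le> ah v v) \<and>
      (\<forall>v\<in>Vh. \<forall>w\<in>Vh. ah v w \<le> \<beta> * nh v * nh w) \<and>
      norm_on VH nH \<and> (\<exists>CHh. \<forall>v\<in>Vh. nH v \<le> CHh * nh v) \<and>
      \<comment> \<open>(A7)\<close>
      linear_on Vh IH \<and> (\<forall>v\<in>Vh. IH v \<in> VH) \<and>
      (\<forall>v\<in>Vh. L2_norm \<Omega> (fdiff v (IH v)) \<le> CI * mesh_size \<T>H * nh v) \<and>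
      (\<forall>v\<in>Vh. nH (IH v) \<le> CI * nh v) \<and>
      (\<forall>v\<in>VH. L2_norm \<Omega> (fdiff v (IH v)) \<le> CI * mesh_size \<T>H * nH v) \<and>
      (\<forall>v\<in>VH. L2_norm \<Omega> (IH v) \<le> CI * nH v) \<and>
      bij_betw IH VH VH \<and>
      (\<forall>v\<in>VH. nH (inv_into VH IH v) \<le> CIinv * nH v) \<and>
      \<comment> \<open>element contributions a_h^T\<close>
      (\<forall>T\<in>\<T>H. bilinear_on Vh (aT T)) \<and>
      (\<forall>v\<in>Vh. \<forall>w\<in>Vh. ah v w = (\<Sum>T\<in>\<T>H. aT T v w)) \<and>
      \<comment> \<open>(A8)\<close>
      (\<forall>m::nat. m \<ge> 1 \<longrightarrow> (\<forall>\<Phi>\<in>VH.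
         (nh (fdiff (corrector \<Omega> \<T>H Vh IH ah aT (patch \<T>H m) \<Phi>)
                    (corrector \<Omega> \<T>H Vh IH ah aT (\<lambda>T. \<Omega>) \<Phi>)))\<^sup>2
         \<le> C8 * real m ^ CARD('d) * \<theta> ^ (2 * m) * (1 / mesh_size \<T>H) ^ (2 * p)
              * (nh (fadd \<Phi> (corrector \<Omega> \<T>H Vh IH ah aT (\<lambda>T. \<Omega>) \<Phi>)))\<^sup>2)) \<and>
      \<comment> \<open>data, reference solution, G-LOD solution\<close>
      L2_fun \<Omega> f \<and>
      uh \<in> Vh \<and> (\<forall>v\<in>Vh. ah uh v = L2_inner \<Omega> f v) \<and>
      k \<ge> 1 \<and>
      uLOD \<in> Vms \<Omega> \<T>H Vh VH IH ah aT (patch \<T>H k) \<and>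
      (\<forall>\<Phi>\<in>Vms \<Omega> \<T>H Vh VH IH ah aT (patch \<T>H k). ah uLOD \<Phi> = L2_inner \<Omega> f \<Phi>))
    \<longrightarrow>
      L2_norm \<Omega> (fdiff uh (inv_into VH IH (IH uLOD))) + nh (fdiff uh uLOD)
        \<le> C * (mesh_size \<T>H + (1 / mesh_size \<T>H) ^ p * real k powr (real CARD('d) / 2) * \<theta> ^ k)
            * L2_norm \<Omega> f"

proof -
  define D where "D = diameter \<Omega>"
  define K1 where "K1 = \<bar>CI\<bar> * (1 + \<bar>CIinv\<bar> * \<bar>CI\<bar>) * (\<bar>CI\<bar> * D + \<bar>CI\<bar> * \<bar>CI\<bar> * (D + 1)) / \<alpha>
         + (\<bar>CI\<bar> * (D + 1) * \<bar>CIinv\<bar> * \<bar>CI\<bar> + 1) * (\<beta> / \<alpha>) * (\<bar>CI\<bar> / \<alpha>)"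
  define K2 where "K2 = (\<bar>CI\<bar> * (D + 1) * \<bar>CIinv\<bar> * \<bar>CI\<bar> + 1) * (\<beta> / \<alpha>) * sqrt \<bar>C8\<bar>
          * ((\<bar>CI\<bar> * D + \<bar>CI\<bar> * \<bar>CI\<bar> * (D + 1)) + \<bar>CI\<bar> * D) / \<alpha>"
  show ?thesis
  proof (rule exI[of _ "max K1 K2"], intro allI impI, elim conjE)
    fix TH :: "(real^'d) set set" and Th Vh VH ah aH nh nH IH aT f uh uLOD and k :: nat
    assume m1: "conforming_mesh \<Omega> TH" and 
      Vhs: "fsubspace Vh" and Vhf: "findim Vh" and L2V: "\<forall>v\<in>Vh. L2_fun \<Omega> v"
      and VHs: "fsubspace VH" and VHV: "VH \<subseteq> Vh" and sp: "scalar_product_on Vh ah"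
      and nh: "norm_on Vh nh" and coer: "\<forall>v\<in>Vh. \<alpha> * (nh v)\<^sup>2 \<le> ah v v"
      and bnd: "\<forall>v\<in>Vh. \<forall>w\<in>Vh. ah v w \<le> \<beta> * nh v * nh w"
      and nH: "norm_on VH nH"
      and IHl: "linear_on Vh IH" and IHVH: "\<forall>v\<in>Vh. IH v \<in> VH"
      and I1: "\<forall>v\<in>Vh. L2_norm \<Omega> (fdiff v (IH v)) \<le> CI * mesh_size TH * nh v"
      and I2: "\<forall>v\<in>Vh. nH (IH v) \<le> CI * nh v"
      and I3: "\<forall>v\<in>VH. L2_norm \<Omega> (fdiff v (IH v)) \<le> CI * mesh_size TH * nH v"
      and I4: "\<forall>v\<in>VH. L2_norm \<Omega> (IH v) \<le> CI * nH v"
      and bij: "bij_betw IH VH VH"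
      and Iinv: "\<forall>v\<in>VH. nH (inv_into VH IH v) \<le> CIinv * nH v"
      and aTb: "\<forall>T\<in>TH. bilinear_on Vh (aT T)"
      and asum: "\<forall>v\<in>Vh. \<forall>w\<in>Vh. ah v w = (\<Sum>T\<in>TH. aT T v w)"
      and A8: "\<forall>m::nat. m \<ge> 1 \<longrightarrow> (\<forall>\<Phi>\<in>VH.
         (nh (fdiff (corrector \<Omega> TH Vh IH ah aT (patch TH m) \<Phi>)
                    (corrector \<Omega> TH Vh IH ah aT (\<lambda>T. \<Omega>) \<Phi>)))\<^sup>2
         \<le> C8 * real m ^ CARD('d) * \<theta> ^ (2 * m) * (1 / mesh_size TH) ^ (2 * p)
              * (nh (fadd \<Phi> (corrector \<Omega> TH Vh IH ah aT (\<lambda>T. \<Omega>) \<Phi>)))\<^sup>2)"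
      and f: "L2_fun \<Omega> f" and uh1: "uh \<in> Vh" and uh2: "\<forall>v\<in>Vh. ah uh v = L2_inner \<Omega> f v"
      and k: "k \<ge> 1"
      and uL1: "uLOD \<in> Vms \<Omega> TH Vh VH IH ah aT (patch TH k)"
      and uL2: "\<forall>\<Phi>\<in>Vms \<Omega> TH Vh VH IH ah aT (patch TH k). ah uLOD \<Phi> = L2_inner \<Omega> f \<Phi>"
    define H where "H = mesh_size TH"
    have H: "0 \<le> H" "H \<le> D" using mesh_bounds[OF m1 dom(2)] unfolding H_def D_def by auto
    have fin: "finite TH" using m1 unfolding conforming_mesh_def by blast
    interpret cset \<Omega> TH Vh IH ah aT
      by unfold_locales (use fin Vhs Vhf sp IHl aTb asum in auto)
    have A8k: "\<forall>\<Phi>\<in>VH.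
         (nh (fdiff (corrector \<Omega> TH Vh IH ah aT (patch TH k) \<Phi>)
                    (corrector \<Omega> TH Vh IH ah aT (\<lambda>T. \<Omega>) \<Phi>)))\<^sup>2
         \<le> C8 * real k ^ CARD('d) * \<theta> ^ (2 * k) * (1 / H) ^ (2 * p)
              * (nh (fadd \<Phi> (corrector \<Omega> TH Vh IH ah aT (\<lambda>T. \<Omega>) \<Phi>)))\<^sup>2"
      using A8 k unfolding H_def by blast
    have M: "L2_norm \<Omega> (fdiff uh (inv_into VH IH (IH uLOD))) + nh (fdiff uh uLOD)
       \<le> K1 * H * L2_norm \<Omega> f + K2 * ((1 / H) ^ p * real k powr (real CARD('d) / 2) * \<theta> ^ k) * L2_norm \<Omega> f"
      unfolding K1_def K2_def
      by (rule main[OF VHs VHV L2V nh coer bnd nH IHVH I1[folded H_def] I2 I3[folded H_def] I4 bij Iinv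
             A8k f uh1 uh2 k uL1 uL2 H ab th(1)])
    define X where "X = (1 / H) ^ p * real k powr (real CARD('d) / 2) * \<theta> ^ k"
    have X0: "X \<ge> 0" unfolding X_def using H th by simp
    have F0: "L2_norm \<Omega> f \<ge> 0" by (rule L2_norm_nonneg)
    have "K1 * H * L2_norm \<Omega> f \<le> max K1 K2 * H * L2_norm \<Omega> f"
      using H F0 by (intro mult_right_mono) auto
    moreover have "K2 * X * L2_norm \<Omega> f \<le> max K1 K2 * X * L2_norm \<Omega> f"
      using X0 F0 by (intro mult_right_mono) auto
    moreover have "max K1 K2 * (H + X) * L2_norm \<Omega> f = max K1 K2 * H * L2_norm \<Omega> f + max K1 K2 * X * L2_norm \<Omega> f"
      by (simp add: algebra_simps)
    ultimately show "L2_norm \<Omega> (fdiff uh (inv_into VH IH (IH uLOD))) + nh (fdiff uh uLOD)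
        \<le> max K1 K2 * (mesh_size TH + (1 / mesh_size TH) ^ p * real k powr (real CARD('d) / 2) * \<theta> ^ k) * L2_norm \<Omega> f"
      using M unfolding X_def H_def by linarith
  qed
qed

end
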